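(* For a nonzero $\vec v\in\mathbb{C}^3$, let $I_{\langle\vec v\rangle}\in SU(3)$ be the unique element having $\langle\vec v\rangle$ as its $+1$-eigenspace and the Hermitian orthogonal complement $\langle\vec v\rangle^\perp$ as its $-1$-eigenspace (the geodesic inversion of $\mathbb{C}P(2)$ at $\langle\vec v\rangle$). For nonzero $\vec v,\vec w\in\mathbb{C}^3$, the composition $I_{\langle\vec v\rangle}I_{\langle\vec w\rangle}$ is a geodesic inversion (i.e. equals $I_{\langle\vec u\rangle}$ for some nonzero $\vec u$) if and only if $\vec v$ and $\vec w$ are Hermitian orthogonal.
   Context: The geodesic inversions are exactly the elements of $SU(3)$ of trace $-1$. *)

theory Defs
  imports "HOL-Analysis.Analysis"
begin

definition herm_inner :: "complex ^ 3 \<Rightarrow> complex ^ 3 \<Rightarrow> complex" where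
  "herm_inner v w = (\<Sum>i\<in>UNIV. cnj (v $ i) * w $ i)"

definition conj_transpose :: "complex ^ 3 ^ 3 \<Rightarrow> complex ^ 3 ^ 3" where
  "conj_transpose A = (\<chi> i j. cnj (A $ j $ i))"

definition SU3 :: "(complex ^ 3 ^ 3) set" where
  "SU3 = {A. A ** conj_transpose A = mat 1 \<and> det A = 1}"

definition geod_inv :: "complex ^ 3 \<Rightarrow> complex ^ 3 ^ 3" where
  "geod_inv v = (THE M. M \<in> SU3 \<and>
      {x. M *v x = x} = range (\<lambda>c::complex. c *s v) \<and>
      {x. M *v x = - x} = {x. herm_inner v x = 0})"

end

theory Submission
  imports Defs
begin

definition G :: "complex ^ 3 \<Rightarrow> complex ^ 3 ^ 3" where
  "G v = (\<chi> i j. (2 / herm_inner v v) * (v $ i * cnj (v $ j)) - (if i = j then 1 else 0))"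

lemma hi_expand: "herm_inner v w = cnj (v$1) * w$1 + cnj (v$2) * w$2 + cnj (v$3) * w$3"
  by (simp add: herm_inner_def sum_3)

lemma hi_lin: "herm_inner v (c *s a - b) = c * herm_inner v a - herm_inner v b"
  by (simp add: hi_expand algebra_simps)

lemma hi_lin2: "herm_inner v (c *s a) = c * herm_inner v a"
  by (simp add: hi_expand algebra_simps)

lemma hi_lin3: "herm_inner v (a - c *s b) = herm_inner v a - c * herm_inner v b"
  by (simp add: hi_expand algebra_simps)

lemma hi_cnj: "cnj (herm_inner v w) = herm_inner w v"
  by (simp add: hi_expand algebra_simps)

lemma hi_self_real: "cnj (herm_inner v v) = herm_inner v v"
  by (simp add: hi_cnj)

lemma hi_nz: assumes "v \<noteq> 0" shows "herm_inner v v \<noteq> 0"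
proof
  assume h: "herm_inner v v = 0"
  have e: "herm_inner v v = of_real (\<Sum>i\<in>UNIV. (cmod (v$i))^2)"
    unfolding herm_inner_def of_real_sum
    by (rule sum.cong) (simp_all only: complex_norm_square mult.commute)
  hence "(\<Sum>i\<in>UNIV. (cmod (v$i))^2) = 0" using h by (simp only: e of_real_eq_0_iff)
  hence "\<forall>i\<in>UNIV. (cmod (v$i))^2 = 0"
    by (subst sum_nonneg_eq_0_iff[symmetric]) auto
  hence "v = 0" by (simp add: vec_eq_iff)
  thus False using assms by simp
qed

lemma Gk_mul: "(\<chi> i j. k * (v $ i * cnj (v $ j)) - (if i = j then 1 else 0)) *v x = (k * herm_inner v x) *s v - (x::complex^3)"
proof -
  have "\<And>i::3. (\<Sum>j\<in>UNIV. (k * (v $ i * cnj (v $ j)) - (if i = j then 1 else 0)) * x $ j)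
     = k * herm_inner v x * v $ i - x $ i"
  proof -
    fix i :: 3
    have "(\<Sum>j\<in>UNIV. (k * (v $ i * cnj (v $ j)) - (if i = j then 1 else 0)) * x $ j)
      = (\<Sum>j\<in>UNIV. k * v $ i * (cnj (v $ j) * x $ j)) - (\<Sum>j\<in>UNIV. (if i = j then x $ j else 0))"
      unfolding left_diff_distrib sum_subtractf
      by (intro arg_cong2[where f="(-)"] sum.cong) (auto simp: algebra_simps)
    also have "\<dots> = k * herm_inner v x * v $ i - x $ i"
      by (simp add: sum_distrib_left[symmetric] herm_inner_def)
    finally show "?thesis i" .
  qed
  thus ?thesis by (simp add: vec_eq_iff matrix_vector_mult_def)
qed

lemma G_mul: "G v *v x = (2 / herm_inner v v * herm_inner v x) *s v - x"
  unfolding G_def by (rule Gk_mul)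


lemma G_herm: "conj_transpose (G v) = G v"
  by (auto simp: conj_transpose_def G_def vec_eq_iff hi_self_real mult.commute)

lemma G_sq: assumes "v \<noteq> 0" shows "G v ** G v = mat 1"
proof -
  have n: "herm_inner v v \<noteq> 0" using hi_nz[OF assms] .
  show ?thesis
  proof (subst matrix_eq, intro allI)
    fix x :: "complex^3"
    show "(G v ** G v) *v x = mat 1 *v x"
      using n
      by (simp add: matrix_vector_mul_assoc[symmetric] G_mul hi_lin vec_eq_iff field_simps)
  qed
qed

lemma det_k: "det (\<chi> i j. k * (v $ i * cnj (v $ j)) - (if i = j then 1 else 0) :: complex ^3^3)
   = k * herm_inner v v - 1"
  by (simp add: det_3 hi_expand) algebra

lemma G_det: assumes "v \<noteq> 0" shows "det (G v) = 1"
  using hi_nz[OF assms] unfolding G_def det_k by simp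

lemma G_SU3: assumes "v \<noteq> 0" shows "G v \<in> SU3"
  using G_det[OF assms] G_sq[OF assms] by (simp add: SU3_def G_herm)


lemma aux2: "(2::complex) * c * a - b = b \<Longrightarrow> b = c * a"
  by (simp add: algebra_simps mult_2[symmetric])

lemma G_fix: assumes "v \<noteq> 0" shows "{x. G v *v x = x} = range (\<lambda>c::complex. c *s v)"
proof -
  have n: "herm_inner v v \<noteq> 0" using hi_nz[OF assms] .
  show ?thesis
  proof (intro set_eqI iffI)
    fix x assume "x \<in> {x. G v *v x = x}"
    hence e: "(2 / herm_inner v v * herm_inner v x) *s v - x = x" by (simp add: G_mul)
    have "x = (1 / herm_inner v v * herm_inner v x) *s v"
    proof -
      have "\<forall>i. 2 * (1 / herm_inner v v * herm_inner v x) * v $ i - x $ i = x $ i"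
        using e by (simp add: vec_eq_iff)
      hence "\<forall>i. x $ i = (1 / herm_inner v v * herm_inner v x) * v $ i"
        using aux2 by blast
      thus ?thesis by (simp add: vec_eq_iff)
    qed
    thus "x \<in> range (\<lambda>c::complex. c *s v)" by blast
  next
    fix x assume "x \<in> range (\<lambda>c::complex. c *s v)"
    then obtain c where xc: "x = c *s v" by blast
    show "x \<in> {x. G v *v x = x}" using n unfolding xc
      by (simp add: G_mul hi_lin2 vec_eq_iff field_simps)
  qed
qed


lemma G_neg: assumes "v \<noteq> 0" shows "{x. G v *v x = - x} = {x. herm_inner v x = 0}"
proof -
  have n: "herm_inner v v \<noteq> 0" using hi_nz[OF assms] .
  have "G v *v x = - x \<longleftrightarrow> herm_inner v x = 0" for x
  proof
    assume "G v *v x = - x"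
    hence "(2 / herm_inner v v * herm_inner v x) *s v = 0"
      by (simp add: G_mul)
    hence "2 / herm_inner v v * herm_inner v x = 0" using assms
      by (metis vector_mul_eq_0)
    thus "herm_inner v x = 0" using n by simp
  next
    assume "herm_inner v x = 0"
    thus "G v *v x = - x" by (simp only: G_mul mult_zero_right vector_smult_lzero diff_0)
  qed
  thus ?thesis by blast
qed

lemma G_unique:
  assumes "v \<noteq> 0" and "M \<in> SU3" and f: "{x. M *v x = x} = range (\<lambda>c::complex. c *s v)"
    and g: "{x. M *v x = - x} = {x. herm_inner v x = 0}"
  shows "M = G v"
proof (subst matrix_eq, intro allI)
  fix x :: "complex^3"
  have n: "herm_inner v v \<noteq> 0" using hi_nz[OF assms(1)] .
  define c where "c = herm_inner v x / herm_inner v v"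
  define y where "y = x - c *s v"
  have "herm_inner v y = 0" using n unfolding y_def c_def
    by (simp add: hi_lin3)
  hence My: "M *v y = - y" using g by blast
  have Mc: "M *v (c *s v) = c *s v" using f by blast
  have "x = c *s v + y" unfolding y_def by simp
  hence "M *v x = M *v (c *s v) + M *v y" by (simp add: matrix_vector_right_distrib)
  hence "M *v x = c *s v - y" using My Mc by simp
  also have "\<dots> = G v *v x" unfolding y_def c_def G_mul using n
    by (simp add: vec_eq_iff field_simps)
  finally show "M *v x = G v *v x" .
qed

lemma geod_eq: assumes "v \<noteq> 0" shows "geod_inv v = G v"
  unfolding geod_inv_def
proof (rule the_equality)
  show "G v \<in> SU3 \<and> {x. G v *v x = x} = range (\<lambda>c::complex. c *s v) \<and>
      {x. G v *v x = - x} = {x. herm_inner v x = 0}"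
    using G_SU3[OF assms] G_fix[OF assms] G_neg[OF assms] by (intro conjI)
next
  fix M assume "M \<in> SU3 \<and> {x. M *v x = x} = range (\<lambda>c::complex. c *s v) \<and>
      {x. M *v x = - x} = {x. herm_inner v x = 0}"
  thus "M = G v" using G_unique[OF assms] by (elim conjE)
qed

definition tr :: "complex^3^3 \<Rightarrow> complex" where "tr A = A$1$1 + A$2$2 + A$3$3"

lemma tr_prod: "tr ((\<chi> i j. k * (v $ i * cnj (v $ j)) - (if i = j then 1 else 0) :: complex^3^3)
   ** (\<chi> i j. l * (w $ i * cnj (w $ j)) - (if i = j then 1 else 0)))
   = k * l * herm_inner v w * herm_inner w v - k * herm_inner v v - l * herm_inner w w + 3"
  by (simp add: tr_def matrix_matrix_mult_def sum_3 hi_expand) algebra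

lemma tr_single: "tr ((\<chi> i j. k * (v $ i * cnj (v $ j)) - (if i = j then 1 else 0) :: complex^3^3))
   = k * herm_inner v v - 3"
  by (simp add: tr_def hi_expand) algebra

definition cr :: "complex^3 \<Rightarrow> complex^3 \<Rightarrow> complex^3" where
  "cr v w = vector [cnj (v$2 * w$3 - v$3 * w$2), cnj (v$3 * w$1 - v$1 * w$3), cnj (v$1 * w$2 - v$2 * w$1)]"

lemma cr_norm: "herm_inner (cr v w) (cr v w) = herm_inner v v * herm_inner w w - herm_inner v w * herm_inner w v"
  by (simp add: cr_def hi_expand vector_3) algebra

lemma key_id:
  assumes h: "herm_inner v w = 0"
  shows "(herm_inner v v * herm_inner w w) *s x = (herm_inner w w * herm_inner v x) *s v
     + (herm_inner v v * herm_inner w x) *s w + herm_inner (cr v w) x *s cr v w"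
proof -
  have h1: "cnj (v$1) * w$1 + cnj (v$2) * w$2 + cnj (v$3) * w$3 = 0" using h by (simp add: hi_expand)
  have h2: "v$1 * cnj (w$1) + v$2 * cnj (w$2) + v$3 * cnj (w$3) = 0"
    using arg_cong[OF h1, of cnj] by simp
  show ?thesis
    unfolding vec_eq_iff forall_3 using h1 h2
    by (simp add: cr_def hi_expand vector_3) algebra
qed

theorem lemma2p4:
  fixes v w :: "complex ^ 3"
  assumes "v \<noteq> 0" and "w \<noteq> 0"
  shows "(\<exists>u::complex ^ 3. u \<noteq> 0 \<and> geod_inv v ** geod_inv w = geod_inv u)
         \<longleftrightarrow> herm_inner v w = 0"
proof -
  have n: "herm_inner v v \<noteq> 0" using hi_nz[OF assms(1)] .
  have m: "herm_inner w w \<noteq> 0" using hi_nz[OF assms(2)] .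
  show ?thesis
  proof
    assume "\<exists>u::complex ^ 3. u \<noteq> 0 \<and> geod_inv v ** geod_inv w = geod_inv u"
    then obtain u where u: "u \<noteq> 0" "G v ** G w = G u" using geod_eq assms by metis
    have nu: "herm_inner u u \<noteq> 0" using hi_nz[OF u(1)] .
    have "tr (G v ** G w) = tr (G u)" using u by simp
    hence "2 / herm_inner v v * (2 / herm_inner w w) * herm_inner v w * herm_inner w v
        - 2 / herm_inner v v * herm_inner v v - 2 / herm_inner w w * herm_inner w w + 3
        = 2 / herm_inner u u * herm_inner u u - 3"
      unfolding G_def tr_prod tr_single .
    hence "2 / herm_inner v v * (2 / herm_inner w w) * herm_inner v w * herm_inner w v = 0"
      using n m nu by simp
    hence "herm_inner v w * cnj (herm_inner v w) = 0" using n m by (simp add: hi_cnj)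
    thus "herm_inner v w = 0" by simp
  next
    assume h: "herm_inner v w = 0"
    define u where "u = cr v w"
    have nu: "herm_inner u u = herm_inner v v * herm_inner w w"
      using h unfolding u_def cr_norm by simp
    hence "herm_inner u u \<noteq> 0" using n m by simp
    hence u0: "u \<noteq> 0" by (auto simp: hi_expand)
    have "G v ** G w = G u"
    proof (subst matrix_eq, intro allI)
      fix x :: "complex^3"
      have K: "(herm_inner v v * herm_inner w w) *s x = (herm_inner w w * herm_inner v x) *s v
     + (herm_inner v v * herm_inner w x) *s w + herm_inner u x *s u"
        using key_id[OF h] unfolding u_def .
      have "(G v ** G w) *v x = G v *v (G w *v x)" by (simp add: matrix_vector_mul_assoc)
      also have "\<dots> = G u *v x"
        unfolding G_mul hi_lin h nu using n m K
        by (simp add: vec_eq_iff field_simps)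
      finally show "(G v ** G w) *v x = G u *v x" .
    qed
    thus "\<exists>u::complex ^ 3. u \<noteq> 0 \<and> geod_inv v ** geod_inv w = geod_inv u"
      using u0 geod_eq assms by metis
  qed
qed

end
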